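(* Let $d_x,d_y\in\mathbb N$, let $\mathcal K\subset\mathbb R^{d_x}$ be a compact domain (a compact set with nonempty interior), and let $p\in[1,\infty)$. For any set of activation functions, networks of width $d_y-1$ are dense neither in $L^p(\mathcal K,\mathbb{R}^{d_y})$ nor in $C(\mathcal K,\mathbb{R}^{d_y})$.
   Context: Given a set $\Sigma$ of activation functions $\mathbb R\to\mathbb R$, a network $f:\mathbb R^{d_x}\to\mathbb R^{d_y}$ is $t_L\circ\sigma_{L-1}\circ\cdots\circ\sigma_1\circ t_1$ with affine $t_\ell:\mathbb R^{d_{\ell-1}}\to\mathbb R^{d_\ell}$ ($d_0=d_x$, $d_L=d_y$) and $\sigma_\ell(x_1,\dots,x_{d_\ell})=(\rho_1(x_1),\dots,\rho_{d_\ell}(x_{d_\ell}))$ with $\rho_i\in\Sigma$; its width is $\max\{d_1,\dots,d_{L-1}\}$. $L^p(\mathcal K,\mathbb R^{d_y})$ carries the norm $(\int_{\mathcal K}\|f(x)\|_p^p dx)^{1/p}$ and $C(\mathcal K,\mathbb R^{d_y})$ the uniform norm $\sup_{x\in\mathcal K}\|f(x)\|_\infty$; density means every element can be approximated within any $\varepsilon>0$ in the respective norm by such networks. *)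

theory Defs
  imports "HOL-Analysis.Analysis"
begin

text \<open>Hidden-layer states are vectors of R^n represented as functions nat => real
  (components with index >= n are 0).  The input space is real^'x, the output space real^'y.\<close>

inductive nn_hidden ::
  "(real \<Rightarrow> real) set \<Rightarrow> nat \<Rightarrow> (real ^ 'x \<Rightarrow> nat \<Rightarrow> real) \<Rightarrow> nat \<Rightarrow> bool"
  for S :: "(real \<Rightarrow> real) set" and w :: nat where
  first: "\<lbrakk> n \<le> w; \<forall>i<n. \<rho> i \<in> S \<rbrakk> \<Longrightarrow>
     nn_hidden S w (\<lambda>x i. if i < n then \<rho> i ((\<Sum>j\<in>UNIV. W i j * x $ j) + b i) else 0) n"
| step: "\<lbrakk> nn_hidden S w g m; n \<le> w; \<forall>i<n. \<rho> i \<in> S \<rbrakk> \<Longrightarrow>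
     nn_hidden S w (\<lambda>x i. if i < n then \<rho> i ((\<Sum>j<m. W i j * g x j) + b i) else 0) n"

definition networks :: "(real \<Rightarrow> real) set \<Rightarrow> nat \<Rightarrow> (real ^ 'x \<Rightarrow> real ^ 'y) set" where
  "networks S w =
     {f. (\<exists>(A :: real ^ 'x ^ 'y) c. f = (\<lambda>x. A *v x + c))
       \<or> (\<exists>g m V c. nn_hidden S w g m \<and> f = (\<lambda>x. \<chi> k. (\<Sum>j<m. V k j * g x j) + c $ k))}"

definition lp_pow :: "real \<Rightarrow> real ^ 'y \<Rightarrow> real" where
  "lp_pow p v = (\<Sum>k\<in>UNIV. \<bar>v $ k\<bar> powr p)"

definition Lp_dist_pow :: "(real ^ 'x) set \<Rightarrow> real \<Rightarrow> (real ^ 'x \<Rightarrow> real ^ 'y)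
    \<Rightarrow> (real ^ 'x \<Rightarrow> real ^ 'y) \<Rightarrow> ennreal" where
  "Lp_dist_pow K p f g = (\<integral>\<^sup>+ x. ennreal (lp_pow p (f x - g x)) \<partial>(lebesgue_on K))"

definition in_Lp :: "(real ^ 'x) set \<Rightarrow> real \<Rightarrow> (real ^ 'x \<Rightarrow> real ^ 'y) \<Rightarrow> bool" where
  "in_Lp K p f \<longleftrightarrow> f \<in> borel_measurable (lebesgue_on K) \<and>
     (\<integral>\<^sup>+ x. ennreal (lp_pow p (f x)) \<partial>(lebesgue_on K)) < \<infinity>"

end

theory Submission
  imports Defs
begin

lemma ball_meas_pos: "r > 0 \<Longrightarrow> 0 < measure lebesgue (ball (c::real^'n) r)"
  using content_ball_pos[of r c] by (simp add: measure_completion)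

lemma nn_hidden_le: "nn_hidden S w g m \<Longrightarrow> m \<le> w"
  by (induction rule: nn_hidden.induct) auto

lemma core:
  fixes g :: "real^'x \<Rightarrow> real^'y" and V :: "nat \<Rightarrow> real^'y"
  assumes g: "g \<in> networks S (CARD('y) - 1)"
    and V0: "V 0 = 0" and V2: "V 2 = 0" and V1: "V 1 $ a = 1"
    and Vall: "\<And>k. \<exists>j\<le>N. V j = axis k 1" and N: "2 \<le> N" and lam: "1/2 \<le> l"
  shows "\<exists>j\<le>N. infnorm (l *\<^sub>R V j - g (y + real j *\<^sub>R t)) \<ge> 1 / (8 * CARD('y))"
proof (rule ccontr)
  define \<epsilon> :: real where "\<epsilon> = 1 / (8 * CARD('y))"
  have epos: "\<epsilon> > 0" by (simp add: \<epsilon>_def)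
  have e4: "\<epsilon> \<le> 1/8" unfolding \<epsilon>_def by (simp add: field_simps)
  assume "\<not> ?thesis"
  hence small: "\<And>j. j \<le> N \<Longrightarrow> infnorm (l *\<^sub>R V j - g (y + real j *\<^sub>R t)) \<le> \<epsilon>"
    unfolding \<epsilon>_def by (meson not_le less_imp_le)
  have comp: "\<And>j k. j \<le> N \<Longrightarrow> \<bar>l * V j $ k - g (y + real j *\<^sub>R t) $ k\<bar> \<le> \<epsilon>"
    proof -
    fix j k assume "j \<le> N"
    have "\<bar>(l *\<^sub>R V j - g (y + real j *\<^sub>R t)) $ k\<bar> \<le> \<epsilon>"
      using small[OF \<open>j \<le> N\<close>] component_le_infnorm_cart order_trans by blast
    thus "\<bar>l * V j $ k - g (y + real j *\<^sub>R t) $ k\<bar> \<le> \<epsilon>" by simp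
  qed
  from g consider (aff) A c where "g = (\<lambda>x. (A :: real^'x^'y) *v x + c)"
    | (hid) h m W c where "nn_hidden S (CARD('y) - 1) h m" "g = (\<lambda>x. \<chi> k. (\<Sum>j<m. W k j * h x j) + c $ k)"
    unfolding networks_def by blast
  then show False
  proof cases
    case aff
    define G where "G j = g (y + real j *\<^sub>R t) $ a" for j
    have lin: "G 0 + G 2 = 2 * G 1"
      unfolding G_def aff by (simp add: matrix_vector_right_distrib matrix_vector_mult_scaleR algebra_simps)
    have "\<bar>G 0\<bar> \<le> \<epsilon>" using comp[of 0 a] V0 by (simp add: G_def)
    moreover have "\<bar>G 2\<bar> \<le> \<epsilon>" using comp[of 2 a] V2 N by (simp add: G_def)
    moreover have "\<bar>l - G 1\<bar> \<le> \<epsilon>" using comp[of 1 a] V1 N by (simp add: G_def)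
    ultimately show False using lin lam e4 by linarith
  next
    case hid
    have m: "m < CARD('y)" using nn_hidden_le[OF hid(1)] zero_less_card_finite[where 'a='y] by linarith
    define cols where "cols = (\<lambda>j. \<chi> k. W k j) ` {..<m}"
    have "dim cols \<le> card cols" by (rule dim_le_card) (auto simp: cols_def span_base)
    also have "\<dots> \<le> m" unfolding cols_def using card_image_le by fastforce
    finally have "dim cols < DIM(real^'y)" using m by simp
    then obtain u :: "real^'y" where u0: "u \<noteq> 0" and uo: "\<And>v. v \<in> span cols \<Longrightarrow> orthogonal u v"
      using orthogonal_to_subspace_exists by blast
    have uW: "(\<Sum>k\<in>UNIV. u $ k * W k j) = 0" if "j < m" for j
    proof -
      have "orthogonal u (\<chi> k. W k j)" using uo that by (auto simp: cols_def span_base)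
      thus ?thesis by (simp add: orthogonal_def inner_vec_def)
    qed
    have ug: "u \<bullet> g x = u \<bullet> c" for x
    proof -
      have "u \<bullet> g x = (\<Sum>k\<in>UNIV. u $ k * ((\<Sum>j<m. W k j * h x j) + c $ k))"
        by (simp add: hid inner_vec_def)
      also have "\<dots> = (\<Sum>j<m. (\<Sum>k\<in>UNIV. u $ k * W k j) * h x j) + u \<bullet> c"
        by (simp add: inner_vec_def algebra_simps sum.distrib sum_distrib_left sum_distrib_right sum.swap[of _ UNIV "{..<m}"])
      also have "\<dots> = u \<bullet> c" using uW by simp
      finally show ?thesis .
    qed
    define U where "U = (\<Sum>k\<in>UNIV. \<bar>u $ k\<bar>)"
    have Upos: "U > 0"
    proof -
      obtain k where "u $ k \<noteq> 0" using u0 by (metis vec_eq_iff zero_index)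
      hence "\<bar>u $ k\<bar> > 0" by simp
      moreover have "\<bar>u $ k\<bar> \<le> U" unfolding U_def by (rule member_le_sum) auto
      ultimately show ?thesis by simp
    qed
    have key: "\<bar>l * (u \<bullet> V j) - u \<bullet> c\<bar> \<le> U * \<epsilon>" if "j \<le> N" for j
    proof -
      have "l * (u \<bullet> V j) - u \<bullet> c = (\<Sum>k\<in>UNIV. u $ k * (l * V j $ k - g (y + real j *\<^sub>R t) $ k))"
        using ug[of "y + real j *\<^sub>R t"] by (simp add: inner_vec_def algebra_simps sum_subtractf sum_distrib_left)
      also have "\<bar>\<dots>\<bar> \<le> (\<Sum>k\<in>UNIV. \<bar>u $ k\<bar> * \<epsilon>)"
        by (rule order_trans[OF sum_abs sum_mono]) (use comp[OF that] in \<open>auto simp: abs_mult intro: mult_left_mono\<close>)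
      finally show ?thesis by (simp add: U_def sum_distrib_right)
    qed
    obtain j0 where j0: "j0 \<le> N" "V j0 = 0" using V0 by auto
    have uc: "\<bar>u \<bullet> c\<bar> \<le> U * \<epsilon>" using key[OF j0(1)] j0(2) by simp
    have "l * \<bar>u $ k\<bar> \<le> 2 * U * \<epsilon>" for k
    proof -
      obtain j where "j \<le> N" "V j = axis k 1" using Vall by blast
      with key have "\<bar>l * u $ k - u \<bullet> c\<bar> \<le> U * \<epsilon>" by (metis inner_axis mult.right_neutral real_inner_1_right)
      thus ?thesis using uc lam by (auto simp: abs_mult)
    qed
    hence "(\<Sum>k\<in>UNIV. l * \<bar>u $ k\<bar>) \<le> (\<Sum>k\<in>(UNIV::'y set). 2 * U * \<epsilon>)" by (intro sum_mono) auto
    hence "l * U \<le> real CARD('y) * (2 * U * \<epsilon>)" by (simp add: U_def sum_distrib_left)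
    also have "\<dots> = U / 4" by (simp add: \<epsilon>_def)
    finally show False using Upos lam by (simp add: field_simps)
  qed
qed


definition tent :: "real \<Rightarrow> real" where "tent s = max 0 (1 - 2 * \<bar>s\<bar>)"

lemma tent_cont: "continuous_on A (\<lambda>x. tent (f x))" if "continuous_on A f"
  unfolding tent_def by (intro continuous_intros that)

lemma tent_int:
  assumes "\<bar>s\<bar> \<le> 1/4"
  shows "tent (s + real j - real i) = (if i = j then 1 - 2 * \<bar>s\<bar> else 0)"
proof (cases "i = j")
  case True thus ?thesis using assms by (simp add: tent_def)
next
  case False
  hence "\<bar>real j - real i\<bar> \<ge> 1" by linarith
  hence "\<bar>s + real j - real i\<bar> \<ge> 3/4" using assms by linarith
  thus ?thesis using False by (simp add: tent_def)
qed

lemma tent_sum: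
  assumes "\<bar>s\<bar> \<le> 1/4" "j \<le> N"
  shows "(\<Sum>i\<le>N. tent (s + real j - real i) *\<^sub>R (V i :: 'a::real_vector)) = (1 - 2 * \<bar>s\<bar>) *\<^sub>R V j"
proof -
  have "(\<Sum>i\<le>N. tent (s + real j - real i) *\<^sub>R V i) = (\<Sum>i\<le>N. if i = j then (1 - 2 * \<bar>s\<bar>) *\<^sub>R V i else 0)"
    by (rule sum.cong) (auto simp: tent_int[OF assms(1)])
  also have "\<dots> = (1 - 2 * \<bar>s\<bar>) *\<^sub>R V j" using assms(2) by (simp add: sum.delta')
  finally show ?thesis .
qed

lemma tent_bound: "\<bar>tent s\<bar> \<le> 1" by (simp add: tent_def)

lemma infnorm_le_lp_pow:
  assumes "0 \<le> e" "e \<le> infnorm (v::real^'y)" "0 < p"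
  shows "e powr p \<le> lp_pow p v"
proof -
  have fin: "finite {\<bar>v$i\<bar> |i. i\<in>UNIV}"
    by (rule finite_subset[of _ "(\<lambda>i. \<bar>v$i\<bar>) ` UNIV"]) auto
  have ne: "{\<bar>v$i\<bar> |i. i\<in>UNIV} \<noteq> {}" by auto
  have "infnorm v \<in> {\<bar>v$i\<bar> |i. i\<in>UNIV}"
    unfolding infnorm_cart cSup_eq_Max[OF fin ne] by (rule Max_in[OF fin ne])
  then obtain k where k: "infnorm v = \<bar>v$k\<bar>" by auto
  have "e powr p \<le> \<bar>v$k\<bar> powr p" using assms k by (intro powr_mono2) auto
  also have "\<dots> \<le> lp_pow p v" unfolding lp_pow_def by (rule member_le_sum) auto
  finally show ?thesis .
qed

theorem lemma14:
  fixes K :: "(real ^ 'x) set" and S :: "(real \<Rightarrow> real) set" and p :: real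
  assumes "compact K" and "interior K \<noteq> {}" and "1 \<le> p"
  shows "(\<exists>(f :: real ^ 'x \<Rightarrow> real ^ 'y) \<epsilon>. in_Lp K p f \<and> \<epsilon> > 0 \<and>
            (\<forall>g \<in> networks S (CARD('y) - 1). g \<in> borel_measurable (lebesgue_on K) \<longrightarrow>
               Lp_dist_pow K p f g \<ge> ennreal (\<epsilon> powr p)))
       \<and> (\<exists>(f :: real ^ 'x \<Rightarrow> real ^ 'y) \<epsilon>. continuous_on K f \<and> \<epsilon> > 0 \<and>
            (\<forall>g \<in> networks S (CARD('y) - 1). \<exists>x\<in>K. infnorm (f x - g x) \<ge> \<epsilon>))"
proof -
  obtain x0 where "x0 \<in> interior K" using assms(2) by blast
  then obtain R where R: "R > 0" "ball x0 R \<subseteq> K"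
    by (meson open_contains_ball open_interior interior_subset subset_trans)
  define C where "C = CARD('y)"
  define N where "N = C + 2"
  obtain en where en: "bij_betw en {0..<C} (UNIV :: 'y set)"
    using ex_bij_betw_nat_finite[of "UNIV :: 'y set"] unfolding C_def by auto
  define a :: 'y where "a = undefined"
  define V :: "nat \<Rightarrow> real^'y" where
    "V j = (if 3 \<le> j \<and> j < N + 1 then axis (en (j - 3)) 1 else if j = 1 then axis a 1 else 0)" for j
  have V0: "V 0 = 0" and V2: "V 2 = 0" and V1: "V 1 $ a = 1" by (auto simp: V_def axis_def)
  have N2: "2 \<le> N" by (simp add: N_def)
  have Vall: "\<exists>j\<le>N. V j = axis k 1" for k
  proof -
    obtain i where "i < C" "en i = k" using en unfolding bij_betw_def by (metis UNIV_I atLeastLessThan_iff imageE)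
    thus ?thesis by (intro exI[of _ "i + 3"]) (auto simp: V_def N_def)
  qed
  have Vb: "\<bar>V i $ k\<bar> \<le> 1" for i k by (auto simp: V_def axis_def)
  define k0 :: 'x where "k0 = undefined"
  define h where "h = R / (2 * (real N + 1))"
  have hpos: "h > 0" using R by (simp add: h_def)
  have Nh: "(real N + 1) * h = R / 2" unfolding h_def by (simp add: field_simps)
  define t :: "real^'x" where "t = h *\<^sub>R axis k0 1"
  define r where "r = h / 4"
  have rpos: "r > 0" using hpos by (simp add: r_def)
  define c0 where "c0 = x0 $ k0"
  define f :: "real^'x \<Rightarrow> real^'y" where
    "f x = (\<Sum>i\<le>N. tent ((x $ k0 - c0) / h - real i) *\<^sub>R V i)" for x
  have fcont: "continuous_on UNIV f" unfolding f_def
    using hpos by (intro continuous_intros tent_cont) auto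
  have sb: "\<bar>(y $ k0 - c0) / h\<bar> \<le> 1/4" if "y \<in> ball x0 r" for y
  proof -
    have "\<bar>y $ k0 - c0\<bar> \<le> norm (y - x0)" unfolding c0_def
      by (metis component_le_norm_cart vector_minus_component)
    also have "\<dots> < r" using that by (simp add: dist_norm norm_minus_commute)
    finally have "\<bar>y $ k0 - c0\<bar> \<le> h / 4" by (simp add: r_def)
    thus ?thesis using hpos by (simp add: abs_divide divide_le_eq)
  qed
  have fval: "f (y + real j *\<^sub>R t) = (1 - 2 * \<bar>(y $ k0 - c0) / h\<bar>) *\<^sub>R V j"
    if "y \<in> ball x0 r" "j \<le> N" for y j
  proof -
    have "\<bar>(y $ k0 - c0) / h\<bar> \<le> 1/4" using sb that(1) by blast
    moreover have "((y + real j *\<^sub>R t) $ k0 - c0) / h - real i = (y $ k0 - c0) / h + real j - real i" for i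
      using hpos by (simp add: t_def field_simps)
    ultimately show ?thesis unfolding f_def using tent_sum[of _ j N V] that(2) by simp
  qed
  have lam: "1/2 \<le> 1 - 2 * \<bar>(y $ k0 - c0) / h\<bar>" if "y \<in> ball x0 r" for y
  proof -
    have "\<bar>(y $ k0 - c0) / h\<bar> \<le> 1/4" using sb that(1) by blast
    thus ?thesis by linarith
  qed
  have inK: "y + real j *\<^sub>R t \<in> K" if "y \<in> ball x0 r" "j \<le> N" for y j
  proof -
    have d0: "dist x0 (y + real j *\<^sub>R t) \<le> dist x0 y + norm (real j *\<^sub>R t)"
      by (metis dist_norm dist_triangle2 add_diff_cancel_left' norm_minus_commute)
    have "norm (real j *\<^sub>R t) = real j * h" using hpos by (simp add: t_def)
    moreover have "real j * h \<le> real N * h" using that(2) hpos by (simp add: mult_right_mono)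
    ultimately have d1: "dist x0 (y + real j *\<^sub>R t) \<le> dist x0 y + real N * h" using d0 by linarith
    have "dist x0 y < h / 4" using that(1) by (simp add: r_def)
    moreover have "real N * h = R / 2 - h" using Nh by (simp add: algebra_simps)
    ultimately have "dist x0 (y + real j *\<^sub>R t) < R" using d1 hpos R(1) by linarith
    thus ?thesis using R by auto
  qed
  define \<eta> :: real where "\<eta> = 1 / (8 * CARD('y))"
  have etapos: "\<eta> > 0" by (simp add: \<eta>_def)
  have x0b: "x0 \<in> ball x0 r" using rpos by simp
  have partC: "\<exists>(f :: real ^ 'x \<Rightarrow> real ^ 'y) \<epsilon>. continuous_on K f \<and> \<epsilon> > 0 \<and>
            (\<forall>g \<in> networks S (CARD('y) - 1). \<exists>x\<in>K. infnorm (f x - g x) \<ge> \<epsilon>)"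
  proof (intro exI conjI ballI)
    show "continuous_on K f" using fcont continuous_on_subset by blast
    show "\<eta> > 0" by (rule etapos)
    fix g :: "real^'x \<Rightarrow> real^'y" assume g: "g \<in> networks S (CARD('y) - 1)"
    obtain j where j: "j \<le> N" "infnorm (1 *\<^sub>R V j - g (x0 + real j *\<^sub>R t)) \<ge> \<eta>"
      using core[OF g V0 V2 V1 Vall N2, of 1 x0 t] unfolding \<eta>_def by auto
    have "f (x0 + real j *\<^sub>R t) = V j" using fval[OF x0b j(1)] by (simp add: c0_def)
    thus "\<exists>x\<in>K. infnorm (f x - g x) \<ge> \<eta>" using j inK[OF x0b j(1)] by (intro bexI[of _ "x0 + real j *\<^sub>R t"]) auto
  qed
  have Kleb: "K \<in> sets lebesgue" using lmeasurable_compact[OF assms(1)] by (simp add: fmeasurable_def)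
  have Kspace: "K \<inter> space lebesgue \<in> sets lebesgue" using Kleb by simp
  have pp: "p > 0" using assms(3) by simp
  have fmeas: "f \<in> borel_measurable (lebesgue_on K)"
    using continuous_imp_measurable_on_sets_lebesgue[OF continuous_on_subset[OF fcont] Kleb] by simp
  have fb: "\<bar>f x $ k\<bar> \<le> real N + 1" for x k
  proof -
    have "\<bar>f x $ k\<bar> = \<bar>\<Sum>i\<le>N. tent ((x $ k0 - c0) / h - real i) * V i $ k\<bar>" by (simp add: f_def)
    also have "\<dots> \<le> (\<Sum>i\<le>N. \<bar>tent ((x $ k0 - c0) / h - real i) * V i $ k\<bar>)" by (rule sum_abs)
    also have "\<dots> \<le> (\<Sum>i\<le>(N::nat). 1)"
      by (intro sum_mono) (simp add: abs_mult mult_le_one tent_bound Vb)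
    finally show ?thesis by simp
  qed
  define B where "B = real C * (real N + 1) powr p"
  have lpb: "lp_pow p (f x) \<le> B" for x
  proof -
    have "lp_pow p (f x) \<le> (\<Sum>k\<in>(UNIV::'y set). (real N + 1) powr p)"
      unfolding lp_pow_def by (intro sum_mono powr_mono2) (use fb pp in auto)
    thus ?thesis by (simp add: B_def C_def)
  qed
  have inLp: "in_Lp K p f"
    unfolding in_Lp_def
  proof (intro conjI fmeas)
    have "(\<integral>\<^sup>+ x. ennreal (lp_pow p (f x)) \<partial>lebesgue_on K) \<le> (\<integral>\<^sup>+ x. ennreal B \<partial>lebesgue_on K)"
      by (intro nn_integral_mono ennreal_leI lpb)
    also have "\<dots> = ennreal B * emeasure lebesgue K"
      using Kspace by (simp add: emeasure_restrict_space)
    also have "\<dots> < \<infinity>"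
    proof -
      have "emeasure lebesgue K < \<infinity>" using lmeasurable_compact[OF assms(1)]
        unfolding fmeasurable_def by blast
      thus ?thesis using ennreal_mult_less_top by (metis ennreal_less_top infinity_ennreal_def)
    qed
    finally show "(\<integral>\<^sup>+ x. ennreal (lp_pow p (f x)) \<partial>lebesgue_on K) < \<infinity>" .
  qed
  define mr where "mr = measure lebesgue (ball x0 r)"
  have mrpos: "mr > 0" unfolding mr_def by (rule ball_meas_pos[OF rpos])
  define X where "X = \<eta> powr p * mr / (2 * (real N + 1))"
  have Xpos: "X > 0" using etapos mrpos by (simp add: X_def)
  define \<epsilon> where "\<epsilon> = X powr (1 / p)"
  have epsp: "\<epsilon> powr p = X" using Xpos pp by (simp add: \<epsilon>_def powr_powr)
  have epos: "\<epsilon> > 0" using Xpos by (simp add: \<epsilon>_def)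
  have partL: "\<exists>(f :: real ^ 'x \<Rightarrow> real ^ 'y) \<epsilon>. in_Lp K p f \<and> \<epsilon> > 0 \<and>
            (\<forall>g \<in> networks S (CARD('y) - 1). g \<in> borel_measurable (lebesgue_on K) \<longrightarrow>
               Lp_dist_pow K p f g \<ge> ennreal (\<epsilon> powr p))"
  proof (intro exI conjI ballI impI)
    show "in_Lp K p f" by (rule inLp)
    show "\<epsilon> > 0" by (rule epos)
    fix g :: "real^'x \<Rightarrow> real^'y"
    assume g: "g \<in> networks S (CARD('y) - 1)" and gm: "g \<in> borel_measurable (lebesgue_on K)"
    show "Lp_dist_pow K p f g \<ge> ennreal (\<epsilon> powr p)"
    proof (rule ccontr)
      assume less0: "\<not> ?thesis"
      hence less: "Lp_dist_pow K p f g < ennreal X" using epsp by simp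
      define Bd where "Bd = {x \<in> K. \<eta> \<le> infnorm (f x - g x)}"
      have im: "(\<lambda>x. infnorm (f x - g x)) \<in> borel_measurable (lebesgue_on K)"
      proof -
        have "(\<lambda>x. f x - g x) \<in> borel_measurable (lebesgue_on K)" using fmeas gm by measurable
        moreover have "infnorm \<in> borel_measurable (borel :: (real^'y) measure)"
          by (intro borel_measurable_continuous_onI continuous_intros)
        ultimately show ?thesis by (rule measurable_compose)
      qed
      have "{x \<in> space (lebesgue_on K). \<eta> \<le> infnorm (f x - g x)} \<in> sets (lebesgue_on K)"
        using im by measurable
      hence BdK: "Bd \<in> sets (lebesgue_on K)" by (simp add: Bd_def)
      hence Bdleb: "Bd \<in> sets lebesgue" using sets_restrict_space_iff[OF Kspace] by blast
      have Bdsub: "Bd \<subseteq> K" by (auto simp: Bd_def)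
      have Bdlm: "Bd \<in> lmeasurable"
        by (rule bounded_set_imp_lmeasurable[OF bounded_subset[OF compact_imp_bounded[OF assms(1)] Bdsub] Bdleb])
      have "(\<integral>\<^sup>+ x. ennreal (\<eta> powr p) * indicator Bd x \<partial>lebesgue_on K) \<le> Lp_dist_pow K p f g"
        unfolding Lp_dist_pow_def
      proof (intro nn_integral_mono)
        fix x
        show "ennreal (\<eta> powr p) * indicator Bd x \<le> ennreal (lp_pow p (f x - g x))"
        proof (cases "x \<in> Bd")
          case True
          hence "\<eta> powr p \<le> lp_pow p (f x - g x)"
            using etapos pp by (intro infnorm_le_lp_pow) (auto simp: Bd_def)
          thus ?thesis using True by (simp add: ennreal_leI)
        qed simp
      qed
      also have "(\<integral>\<^sup>+ x. ennreal (\<eta> powr p) * indicator Bd x \<partial>lebesgue_on K) = ennreal (\<eta> powr p) * emeasure (lebesgue_on K) Bd"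
        using BdK by (rule nn_integral_cmult_indicator)
      also have "emeasure (lebesgue_on K) Bd = emeasure lebesgue Bd"
        using Kspace Bdsub by (rule emeasure_restrict_space)
      also have "\<dots> = ennreal (measure lebesgue Bd)" using Bdlm by (simp add: emeasure_eq_measure2)
      finally have "ennreal (\<eta> powr p * measure lebesgue Bd) < ennreal X"
        using less by (simp add: ennreal_mult'[symmetric])
      hence "\<eta> powr p * measure lebesgue Bd < X" by (simp add: ennreal_less_iff)
      hence "\<eta> powr p * measure lebesgue Bd < \<eta> powr p * (mr / (2 * (real N + 1)))"
        by (simp add: X_def)
      moreover have "\<eta> powr p > 0" using etapos by simp
      ultimately have mBd: "measure lebesgue Bd < mr / (2 * (real N + 1))"
        using mult_less_cancel_left_pos by blast
      define Y where "Y j = (\<lambda>x. x - real j *\<^sub>R t) ` Bd" for j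
      have Ylm: "Y j \<in> lmeasurable" for j unfolding Y_def by (rule measurable_translation_subtract[OF Bdlm])
      have mY: "measure lebesgue (Y j) = measure lebesgue Bd" for j
        unfolding Y_def by (rule measure_translation_subtract)
      have "measure lebesgue (\<Union>j\<le>N. Y j) \<le> (\<Sum>j\<le>N. measure lebesgue (Y j))"
        by (rule measure_UNION_le) (use Ylm in \<open>auto simp: fmeasurable_def\<close>)
      also have "\<dots> = (real N + 1) * measure lebesgue Bd" by (simp add: mY)
      also have "\<dots> < mr" using mBd mrpos by (simp add: field_simps)
      finally have mU: "measure lebesgue (\<Union>j\<le>N. Y j) < mr" .
      have "\<not> ball x0 r \<subseteq> (\<Union>j\<le>N. Y j)"
      proof
        assume sub: "ball x0 r \<subseteq> (\<Union>j\<le>N. Y j)"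
        have "(\<Union>j\<le>N. Y j) \<in> lmeasurable" using Ylm by (intro fmeasurable.finite_UN) auto
        hence "mr \<le> measure lebesgue (\<Union>j\<le>N. Y j)" unfolding mr_def
          by (intro measure_mono_fmeasurable[OF sub]) auto
        thus False using mU by simp
      qed
      then obtain y where y: "y \<in> ball x0 r" "\<And>j. j \<le> N \<Longrightarrow> y \<notin> Y j" by blast
      define l where "l = 1 - 2 * \<bar>(y $ k0 - c0) / h\<bar>"
      have good: "infnorm (l *\<^sub>R V j - g (y + real j *\<^sub>R t)) < \<eta>" if "j \<le> N" for j
      proof -
        have "y + real j *\<^sub>R t \<notin> Bd"
        proof
          assume "y + real j *\<^sub>R t \<in> Bd"
          hence "y \<in> Y j" unfolding Y_def by (rule rev_image_eqI) simp
          thus False using y(2)[OF that] by simp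
        qed
        hence "\<not> \<eta> \<le> infnorm (f (y + real j *\<^sub>R t) - g (y + real j *\<^sub>R t))"
          using inK[OF y(1) that] by (simp add: Bd_def)
        thus ?thesis using fval[OF y(1) that] by (simp add: l_def)
      qed
      obtain j where "j \<le> N" "infnorm (l *\<^sub>R V j - g (y + real j *\<^sub>R t)) \<ge> \<eta>"
        using core[OF g V0 V2 V1 Vall N2 lam[OF y(1)], of y t] unfolding \<eta>_def l_def by auto
      thus False using good by fastforce
    qed
  qed
  show ?thesis using partL partC by blast
qed

end
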